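(* Let $G$ be an $H(4,3)$-free graph and $u^*\in V(G)$. Put $N=N(u^* )$, $W=V(G)\setminus N[u^*]$, and $A^{+}=\{v\in N: v \text{ has at least one neighbor in } N\}$. Assume that $G[A^{+}]\cong K_4$ and that every vertex of $W$ has at most one neighbor in $A^{+}$. Let $U=\{w\in W: w \text{ has exactly one neighbor in } A^{+}\}$. Then \[ e(A^{+},W)=|U|\le \alpha(G[W]). \]
   Context: $H(4,3)$ is the graph obtained from a $4$-cycle and a triangle by identifying one vertex of the $4$-cycle with one vertex of the triangle; $H(4,3)$-free means containing no subgraph isomorphic to $H(4,3)$. $N[u^*]=N(u^* )\cup\{u^*\}$. For disjoint vertex sets $X,Y$, $e(X,Y)$ is the number of edges with one end in $X$ and the other in $Y$. $\alpha(H)$ denotes the independence number of $H$, and $G[W]$ is the subgraph induced by $W$. *)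

theory Defs
  imports Main
begin

definition simple_graph :: "'a set \<Rightarrow> ('a \<Rightarrow> 'a \<Rightarrow> bool) \<Rightarrow> bool" where
  "simple_graph V E \<longleftrightarrow> finite V \<and> (\<forall>x y. E x y \<longrightarrow> x \<in> V \<and> y \<in> V)
     \<and> (\<forall>x y. E x y \<longrightarrow> E y x) \<and> (\<forall>x. \<not> E x x)"

definition nbhd :: "'a set \<Rightarrow> ('a \<Rightarrow> 'a \<Rightarrow> bool) \<Rightarrow> 'a \<Rightarrow> 'a set" where
  "nbhd V E u = {v \<in> V. E u v}"

definition closed_nbhd :: "'a set \<Rightarrow> ('a \<Rightarrow> 'a \<Rightarrow> bool) \<Rightarrow> 'a \<Rightarrow> 'a set" where
  "closed_nbhd V E u = insert u (nbhd V E u)"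

definition H43_free :: "'a set \<Rightarrow> ('a \<Rightarrow> 'a \<Rightarrow> bool) \<Rightarrow> bool" where
  "H43_free V E \<longleftrightarrow> \<not> (\<exists>a b c d e f. distinct [a, b, c, d, e, f]
      \<and> {a, b, c, d, e, f} \<subseteq> V
      \<and> E a b \<and> E b c \<and> E c d \<and> E d a \<and> E a e \<and> E e f \<and> E f a)"

text \<open>e(X,Y) for disjoint X, Y: number of edges xy with x in X, y in Y.\<close>
definition edges_between :: "('a \<Rightarrow> 'a \<Rightarrow> bool) \<Rightarrow> 'a set \<Rightarrow> 'a set \<Rightarrow> nat" where
  "edges_between E X Y = card {(x, y). x \<in> X \<and> y \<in> Y \<and> E x y}"

definition independent :: "('a \<Rightarrow> 'a \<Rightarrow> bool) \<Rightarrow> 'a set \<Rightarrow> bool" where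
  "independent E S \<longleftrightarrow> (\<forall>x\<in>S. \<forall>y\<in>S. \<not> E x y)"

definition indep_number :: "('a \<Rightarrow> 'a \<Rightarrow> bool) \<Rightarrow> 'a set \<Rightarrow> nat" where
  "indep_number E W = Max {card S | S. S \<subseteq> W \<and> independent E S}"

definition induced_complete :: "('a \<Rightarrow> 'a \<Rightarrow> bool) \<Rightarrow> 'a set \<Rightarrow> nat \<Rightarrow> bool" where
  "induced_complete E A n \<longleftrightarrow> finite A \<and> card A = n \<and> (\<forall>x\<in>A. \<forall>y\<in>A. x \<noteq> y \<longrightarrow> E x y)"

end

theory Submission
  imports Defs
begin

lemma two_others:
  assumes "finite A" "card A = 4"
  shows "\<exists>b c. b \<in> A \<and> c \<in> A \<and> b \<noteq> c \<and> b \<noteq> x \<and> b \<noteq> y \<and> c \<noteq> x \<and> c \<noteq> y"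
proof -
  have "card (A - {x,y}) \<ge> 2"
  proof -
    have "card A - card {x,y} \<le> card (A - {x,y})"
      by (rule diff_card_le_card_Diff) simp
    moreover have "card {x,y} \<le> 2" by (simp add: card_insert_le_m1)
    ultimately show ?thesis using assms by linarith
  qed
  then obtain b where b: "b \<in> A - {x,y}"
    by (metis all_not_in_conv card.empty not_numeral_le_zero)
  have "card (A - {x,y} - {b}) \<ge> 1" using \<open>card (A - {x,y}) \<ge> 2\<close> b assms(1)
    by (simp add: card_Diff_singleton)
  then obtain c where "c \<in> A - {x,y} - {b}"
    by (metis all_not_in_conv card.empty not_one_le_zero)
  then show ?thesis using b by blast
qed

theorem corollary4p3:
  fixes V :: "'a set" and E :: "'a \<Rightarrow> 'a \<Rightarrow> bool" and u :: 'a
  assumes "simple_graph V E"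
    and "H43_free V E"
    and "u \<in> V"
    and "Ap = {v \<in> nbhd V E u. \<exists>x \<in> nbhd V E u. E v x}"
    and "W = V - closed_nbhd V E u"
    and "induced_complete E Ap 4"
    and "\<forall>w\<in>W. card {a \<in> Ap. E w a} \<le> 1"
    and "U = {w \<in> W. card {a \<in> Ap. E w a} = 1}"
  shows "edges_between E Ap W = card U \<and> card U \<le> indep_number E W"
proof -
  have fin: "finite V" and sym: "\<And>x y. E x y \<Longrightarrow> E y x" and irr: "\<And>x. \<not> E x x"
    and inV: "\<And>x y. E x y \<Longrightarrow> x \<in> V \<and> y \<in> V"
    using assms(1) unfolding simple_graph_def by blast+
  have ApN: "\<And>a. a \<in> Ap \<Longrightarrow> E u a \<and> a \<in> V" using assms(4) unfolding nbhd_def by auto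
  have Wd: "\<And>w. w \<in> W \<Longrightarrow> w \<in> V \<and> w \<noteq> u \<and> \<not> E u w" using assms(5)
    unfolding closed_nbhd_def nbhd_def by auto
  have finA: "finite Ap" and cA: "card Ap = 4" and K: "\<And>x y. x \<in> Ap \<Longrightarrow> y \<in> Ap \<Longrightarrow> x \<noteq> y \<Longrightarrow> E x y"
    using assms(6) unfolding induced_complete_def by auto
  have finW: "finite W" using assms(5) fin by auto
  have uniq: "\<And>w a b. w \<in> W \<Longrightarrow> a \<in> Ap \<Longrightarrow> b \<in> Ap \<Longrightarrow> E w a \<Longrightarrow> E w b \<Longrightarrow> a = b"
  proof -
    fix w a b assume h: "w \<in> W" "a \<in> Ap" "b \<in> Ap" "E w a" "E w b"
    have "card {a \<in> Ap. E w a} \<le> 1" using assms(7) h(1) by blast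
    moreover have "finite {a \<in> Ap. E w a}" using finA by simp
    moreover have "a \<in> {a \<in> Ap. E w a}" "b \<in> {a \<in> Ap. E w a}" using h by auto
    ultimately show "a = b" using card_le_Suc0_iff_eq by (metis One_nat_def)
  qed
  have Uchar: "U = {w \<in> W. \<exists>a \<in> Ap. E w a}"
  proof -
    have "\<And>w. w \<in> W \<Longrightarrow> (card {a \<in> Ap. E w a} = 1) = (\<exists>a \<in> Ap. E w a)"
    proof -
      fix w assume w: "w \<in> W"
      show "(card {a \<in> Ap. E w a} = 1) = (\<exists>a \<in> Ap. E w a)"
      proof
        assume "card {a \<in> Ap. E w a} = 1" then show "\<exists>a \<in> Ap. E w a"
          by (metis (no_types, lifting) One_nat_def card_1_singletonE insertI1 mem_Collect_eq)
      next
        assume "\<exists>a \<in> Ap. E w a"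
        then obtain a where a: "a \<in> Ap" "E w a" by blast
        then have "{a \<in> Ap. E w a} = {a}" using uniq[OF w] by blast
        then show "card {a \<in> Ap. E w a} = 1" by simp
      qed
    qed
    then show ?thesis using assms(8) by blast
  qed
  have e1: "edges_between E Ap W = card U"
  proof -
    have "bij_betw snd {(x, y). x \<in> Ap \<and> y \<in> W \<and> E x y} U"
    proof (rule bij_betwI')
      fix p q assume "p \<in> {(x, y). x \<in> Ap \<and> y \<in> W \<and> E x y}" "q \<in> {(x, y). x \<in> Ap \<and> y \<in> W \<and> E x y}"
      then show "(snd p = snd q) = (p = q)" using uniq sym by (cases p; cases q) auto
    next
      fix p assume "p \<in> {(x, y). x \<in> Ap \<and> y \<in> W \<and> E x y}"
      then show "snd p \<in> U" unfolding Uchar using sym by (cases p) auto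
    next
      fix w assume "w \<in> U"
      then obtain a where "a \<in> Ap" "w \<in> W" "E w a" unfolding Uchar by blast
      then show "\<exists>p\<in>{(x, y). x \<in> Ap \<and> y \<in> W \<and> E x y}. w = snd p" using sym by force
    qed
    then show ?thesis unfolding edges_between_def by (rule bij_betw_same_card)
  qed
  have indep: "independent E U"
    unfolding independent_def
  proof (intro ballI notI)
    fix w1 w2 assume w1: "w1 \<in> U" and w2: "w2 \<in> U" and e: "E w1 w2"
    obtain a1 where a1: "a1 \<in> Ap" "E w1 a1" using w1 Uchar by blast
    obtain a2 where a2: "a2 \<in> Ap" "E w2 a2" using w2 Uchar by blast
    have W1: "w1 \<in> W" "w2 \<in> W" using w1 w2 Uchar by auto
    have ne: "w1 \<noteq> w2" using e irr by blast
    obtain b c where bc: "b \<in> Ap" "c \<in> Ap" "b \<noteq> c" "b \<noteq> a1" "b \<noteq> a2" "c \<noteq> a1" "c \<noteq> a2"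
      using two_others[OF finA cA] by blast
    have nA: "\<And>x. x \<in> Ap \<Longrightarrow> x \<noteq> w1 \<and> x \<noteq> w2 \<and> x \<noteq> u"
      proof -
      fix x assume x: "x \<in> Ap"
      have "E u x" using ApN[OF x] by blast
      moreover have "\<not> E u w1" "\<not> E u w2" using Wd W1 by blast+
      ultimately show "x \<noteq> w1 \<and> x \<noteq> w2 \<and> x \<noteq> u" using irr by blast
    qed
    show False
    proof (cases "a1 = a2")
      case True
      have "distinct [a1, b, u, c, w1, w2] \<and> {a1, b, u, c, w1, w2} \<subseteq> V
        \<and> E a1 b \<and> E b u \<and> E u c \<and> E c a1 \<and> E a1 w1 \<and> E w1 w2 \<and> E w2 a1"
      proof -
        have d: "distinct [a1, b, u, c, w1, w2]"
          using Wd[OF W1(1)] Wd[OF W1(2)] bc nA[OF a1(1)] nA[OF bc(1)] nA[OF bc(2)] ne True by auto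
        have s: "{a1, b, u, c, w1, w2} \<subseteq> V" using ApN a1(1) bc(1,2) Wd W1 assms(3) by blast
        have "E a1 b" "E c a1" using K a1(1) bc True by metis+
        moreover have "E b u" "E u c" using ApN bc(1,2) sym by blast+
        moreover have "E a1 w1" "E w2 a1" using a1 a2 True sym by blast+
        ultimately show ?thesis using d s e by blast
      qed
      then have "\<exists>a b c d e f. distinct [a, b, c, d, e, f]
      \<and> {a, b, c, d, e, f} \<subseteq> V
      \<and> E a b \<and> E b c \<and> E c d \<and> E d a \<and> E a e \<and> E e f \<and> E f a" by (intro exI)
      then show False using assms(2) unfolding H43_free_def by (rule notE[rotated])
    next
      case False
      have "distinct [a1, w1, w2, a2, b, c] \<and> {a1, w1, w2, a2, b, c} \<subseteq> V
        \<and> E a1 w1 \<and> E w1 w2 \<and> E w2 a2 \<and> E a2 a1 \<and> E a1 b \<and> E b c \<and> E c a1"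
      proof -
        have d: "distinct [a1, w1, w2, a2, b, c]"
          using bc nA[OF a1(1)] nA[OF a2(1)] nA[OF bc(1)] nA[OF bc(2)] ne False by auto
        have s: "{a1, w1, w2, a2, b, c} \<subseteq> V" using ApN a1(1) a2(1) bc(1,2) Wd W1 by blast
        have "E a2 a1" "E a1 b" "E b c" "E c a1" using K a1(1) a2(1) bc False by metis+
        moreover have "E a1 w1" "E w2 a2" using a1 a2 sym by blast+
        ultimately show ?thesis using d s e by blast
      qed
      then have "\<exists>a b c d e f. distinct [a, b, c, d, e, f]
      \<and> {a, b, c, d, e, f} \<subseteq> V
      \<and> E a b \<and> E b c \<and> E c d \<and> E d a \<and> E a e \<and> E e f \<and> E f a" by (intro exI)
      then show False using assms(2) unfolding H43_free_def by (rule notE[rotated])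
    qed
  qed
  have "card U \<le> indep_number E W"
    unfolding indep_number_def
  proof (rule Max_ge)
    have "{card S |S. S \<subseteq> W \<and> independent E S} \<subseteq> card ` Pow W" by auto
    then show "finite {card S |S. S \<subseteq> W \<and> independent E S}"
      using finW by (meson finite_Pow_iff finite_imageI finite_subset)
    show "card U \<in> {card S |S. S \<subseteq> W \<and> independent E S}"
      using indep Uchar by auto
  qed
  with e1 show ?thesis by simp
qed

end
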